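(* Fix an integer $k\ge0$ and for $m\ge0$ let $S_m=(-1)^k\sum_{i=0}^{m}\binom{2k}{m-i}\binom{4k+i}{i}$. Then $S_0=(-1)^k$, $S_1=(-1)^k(6k+1)$, and for all $m\ge0$, \[ (m+2)S_{m+2}=(6k+1)S_{m+1}+(m+1+2k)S_m . \] Moreover, the sequence $T_m=\sum_{i=0}^{2k}(-1)^i\binom{m+k+i}{m+k-i}\binom{m+3k-i}{m-k+i}$ satisfies the same recurrence $(m+2)T_{m+2}=(6k+1)T_{m+1}+(m+1+2k)T_m$ for all $m\ge 0$, with $T_0=(-1)^k$ and $T_1=(-1)^k(6k+1)$.
   Context: Binomial coefficients $\binom{a}{b}$ with integer $a\ge0$ are taken to be $0$ when $b<0$ or $b>a$. *)

theory Defs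
  imports Main
begin

definition ibinom :: "int \<Rightarrow> int \<Rightarrow> int" where
  "ibinom a b = (if 0 \<le> b \<and> b \<le> a then int (nat a choose nat b) else 0)"

definition seqS :: "nat \<Rightarrow> nat \<Rightarrow> int" where
  "seqS k m = (-1) ^ k * (\<Sum>i=0..m. ibinom (2 * int k) (int m - int i) * ibinom (4 * int k + int i) (int i))"

definition seqT :: "nat \<Rightarrow> nat \<Rightarrow> int" where
  "seqT k m = (\<Sum>i=0..2*k. (-1) ^ i * ibinom (int m + int k + int i) (int m + int k - int i)
                              * ibinom (int m + 3 * int k - int i) (int m - int k + int i))"

end

theory Submission imports Defs "HOL-Computational_Algebra.Formal_Power_Series" begin


lemma divE': "(a::real) = b / c \<Longrightarrow> c \<noteq> 0 \<Longrightarrow> a * c = b" by simp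

lemma binom_parts:
  fixes x r :: nat
  defines "W \<equiv> pochhammer (real x - real r + 1) r"
  shows "real (x choose (r+2)) * fact (r+2) = W * (real x - real r) * (real x - real r - 1)"
  and "real ((x+1) choose (r+2)) * fact (r+2) = W * (real x + 1) * (real x - real r)"
  and "real ((x+2) choose (r+2)) * fact (r+2) = W * (real x + 2) * (real x + 1)"
  and "real (x choose r) * fact (r+2) = W * (real r + 2) * (real r + 1)"
proof -
  have ff: "(fact (r+2)::real) \<noteq> 0" by (rule fact_nonzero)
  show "real (x choose (r+2)) * fact (r+2) = W * (real x - real r) * (real x - real r - 1)"
  proof (rule divE'[OF _ ff])
    have "real (x choose (r+2)) = pochhammer (real x - real (r+2) + 1) (2 + r) / fact (r+2)"
      by (simp only: binomial_gbinomial gbinomial_pochhammer' add.commute of_nat_id)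
    also have "pochhammer (real x - real (r+2) + 1) (2 + r) = pochhammer (real x - real (r+2) + 1) 2 * W"
      unfolding pochhammer_product' W_def by (simp add: algebra_simps)
    also have "pochhammer (real x - real (r+2) + 1) 2 = (real x - real r) * (real x - real r - 1)"
      by (simp add: pochhammer_Suc numeral_2_eq_2 algebra_simps)
    finally show "real (x choose (r+2)) = W * (real x - real r) * (real x - real r - 1) / fact (r+2)"
      by (simp add: algebra_simps)
  qed
  show "real ((x+1) choose (r+2)) * fact (r+2) = W * (real x + 1) * (real x - real r)"
  proof (rule divE'[OF _ ff])
    have "real ((x+1) choose (r+2)) = pochhammer (real (x+1) - real (r+2) + 1) (Suc (Suc r)) / fact (r+2)"
      by (simp only: binomial_gbinomial gbinomial_pochhammer' of_nat_id) simp
    also have "real (x+1) - real (r+2) + 1 = real x - real r" by simp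
    also have "pochhammer (real x - real r) (Suc (Suc r)) = (real x - real r) * W * (real x + 1)"
    proof -
      have "pochhammer (real x - real r) (Suc (Suc r)) = (real x - real r) * pochhammer (real x - real r + 1) (Suc r)"
        by (rule pochhammer_rec)
      also have "pochhammer (real x - real r + 1) (Suc r) = W * (real x - real r + 1 + real r)"
        unfolding W_def by (rule pochhammer_Suc)
      finally show ?thesis by (simp add: algebra_simps)
    qed
    finally show "real ((x+1) choose (r+2)) = W * (real x + 1) * (real x - real r) / fact (r+2)"
      by (simp add: algebra_simps)
  qed
  show "real ((x+2) choose (r+2)) * fact (r+2) = W * (real x + 2) * (real x + 1)"
  proof (rule divE'[OF _ ff])
    have "real ((x+2) choose (r+2)) = pochhammer (real (x+2) - real (r+2) + 1) (r + 2) / fact (r+2)"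
      by (simp only: binomial_gbinomial gbinomial_pochhammer' of_nat_id)
    also have "real (x+2) - real (r+2) + 1 = real x - real r + 1" by simp
    also have "pochhammer (real x - real r + 1) (r+2) = W * ((real x + 1) * (real x + 2))"
      unfolding pochhammer_product' W_def by (simp add: pochhammer_Suc numeral_2_eq_2 algebra_simps)
    finally show "real ((x+2) choose (r+2)) = W * (real x + 2) * (real x + 1) / fact (r+2)"
      by (simp add: algebra_simps)
  qed
  show "real (x choose r) * fact (r+2) = W * (real r + 2) * (real r + 1)"
  proof -
    have "real (x choose r) = W / fact r"
      by (simp add: binomial_gbinomial gbinomial_pochhammer' W_def algebra_simps)
    moreover have "(fact (r+2)::real) = fact r * ((real r + 2) * (real r + 1))"
      by (simp add: algebra_simps)
    ultimately show ?thesis by simp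
  qed
qed



lemma core_gen:
  fixes m k i W V F E A0 A1 A2 Am B0 B1 B2 Bm :: real
  assumes x: "x = m+k+i" and y: "y = m+3*k-i" and r: "r = 2*i-2" and s: "s = 4*k-2*i-2"
  and a0: "A0*F = W*(x-r)*(x-r-1)" and a1: "A1*F = W*(x+1)*(x-r)" and a2: "A2*F = W*(x+2)*(x+1)"
  and am: "Am*F = W*(r+2)*(r+1)"
  and b0: "B0*E = V*(y-s)*(y-s-1)" and b1: "B1*E = V*(y+1)*(y-s)" and b2: "B2*E = V*(y+2)*(y+1)"
  and bm: "Bm*E = V*(s+2)*(s+1)"
  and F: "F \<noteq> 0" and E: "E \<noteq> 0"
  shows "(m+2)*A2*B2 - (6*k+1)*A1*B1 - (m+2*k+1)*A0*B0 = k*A1*Bm + k*Am*B1"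
proof -
  have "((m+2)*A2*B2 - (6*k+1)*A1*B1 - (m+2*k+1)*A0*B0) * (F*E)
      = (m+2)*(A2*F)*(B2*E) - (6*k+1)*(A1*F)*(B1*E) - (m+2*k+1)*(A0*F)*(B0*E)"
    by (simp add: algebra_simps)
  also have "\<dots> = (k*(A1*F)*(Bm*E) + k*(Am*F)*(B1*E))"
    unfolding a0 a1 a2 am b0 b1 b2 bm x y r s by (simp add: algebra_simps)
  also have "\<dots> = (k*A1*Bm + k*Am*B1) * (F*E)" by (simp add: algebra_simps)
  finally show ?thesis using F E by simp
qed

lemma core_edge:
  fixes m k V E B0 B1 B2 Bm :: real
  assumes y: "y = m+3*k" and s: "s = 4*k-2"
  and b0: "B0*E = V*(y-s)*(y-s-1)" and b1: "B1*E = V*(y+1)*(y-s)" and b2: "B2*E = V*(y+2)*(y+1)"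
  and bm: "Bm*E = V*(s+2)*(s+1)"
  and E: "E \<noteq> 0"
  shows "(m+2)*B2 - (6*k+1)*B1 - (m+2*k+1)*B0 = k*Bm"
proof -
  have "((m+2)*B2 - (6*k+1)*B1 - (m+2*k+1)*B0) * E
      = (m+2)*(B2*E) - (6*k+1)*(B1*E) - (m+2*k+1)*(B0*E)"
    by (simp add: algebra_simps)
  also have "\<dots> = k*(Bm*E)"
    unfolding b0 b1 b2 bm y s by (simp add: algebra_simps)
  also have "\<dots> = (k*Bm) * E" by (simp add: algebra_simps)
  finally show ?thesis using E by simp
qed



definition tt :: "nat \<Rightarrow> nat \<Rightarrow> nat \<Rightarrow> int" where
  "tt k m i = (-1)^i * int ((m+k+i) choose (2*i)) * int ((m+3*k-i) choose (4*k-2*i))"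

definition gg :: "nat \<Rightarrow> nat \<Rightarrow> nat \<Rightarrow> int" where
  "gg k m j = (-1)^j * int k * int ((m+k+j+1) choose (2*j)) * int ((m+3*k-j) choose (4*k-2*j-2))"

lemma T_gen:
  assumes i1: "1 \<le> i" and i2: "i < 2*k"
  shows "int(m+2)*tt k (m+2) i - (6*int k+1)*tt k (m+1) i - (int m+1+2*int k)*tt k m i
         = gg k m i - gg k m (i-1)"
proof -
  define x r y s where "x = m+k+i" and "r = 2*i-2" and "y = m+3*k-i" and "s = 4*k-2*i-2"
  have e: "2*i = r+2" "4*k-2*i = s+2" "m+2+k+i = x+2" "m+1+k+i = x+1" "m+k+i = x"
     "m+2+3*k-i = y+2" "m+1+3*k-i = y+1" "m+3*k-i = y" "m+k+i+1 = x+1" "2*(i-1) = r"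
     "m+k+(i-1)+1 = x" "m+3*k-(i-1) = y+1" "4*k-2*(i-1)-2 = s+2" "4*k-2*i-2 = s"
     "4*k-(r+2) = s+2" "4*k-r-2 = s+2" "4*k-(r+2)-2 = s"
    using assms by (auto simp: x_def r_def y_def s_def)
  have sg: "(-1::int)^(i-1) = - ((-1)^i)"
    using i1 by (cases i) auto
  have t2: "tt k (m+2) i = (-1)^i * int((x+2) choose (r+2)) * int((y+2) choose (s+2))"
    unfolding tt_def e by simp
  have t1: "tt k (m+1) i = (-1)^i * int((x+1) choose (r+2)) * int((y+1) choose (s+2))"
    unfolding tt_def e by simp
  have t0: "tt k m i = (-1)^i * int(x choose (r+2)) * int(y choose (s+2))"
    unfolding tt_def e by simp
  have g1: "gg k m i = (-1)^i * int k * int((x+1) choose (r+2)) * int(y choose s)"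
    unfolding gg_def e by simp
  have g0: "gg k m (i-1) = - ((-1)^i * int k * int(x choose r) * int((y+1) choose (s+2)))"
    unfolding gg_def e sg by simp
  have rx: "real x = real m + real k + real i" "real r = 2*real i - 2"
     "real y = real m + 3*real k - real i" "real s = 4*real k - 2*real i - 2"
    using assms by (auto simp: x_def r_def y_def s_def of_nat_diff)
  note A = binom_parts[of x r] and B = binom_parts[of y s]
  have R: "(real m+2)*real((x+2) choose (r+2))*real((y+2) choose (s+2))
      - (6*real k+1)*real((x+1) choose (r+2))*real((y+1) choose (s+2))
      - (real m+2*real k+1)*real(x choose (r+2))*real(y choose (s+2))
      = real k*real((x+1) choose (r+2))*real(y choose s) + real k*real(x choose r)*real((y+1) choose (s+2))"
    apply (rule core_gen[where x="real x" and r="real r" and y="real y" and s="real s" and i="real i"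
          and F="fact (r+2)" and E="fact (s+2)" and W="pochhammer (real x - real r + 1) r"
          and V="pochhammer (real y - real s + 1) s"])
    by (rule rx A B fact_nonzero)+
  have I: "int(m+2)*int((x+2) choose (r+2))*int((y+2) choose (s+2))
      - (6*int k+1)*int((x+1) choose (r+2))*int((y+1) choose (s+2))
      - (int m+1+2*int k)*int(x choose (r+2))*int(y choose (s+2))
      = int k*int((x+1) choose (r+2))*int(y choose s) + int k*int(x choose r)*int((y+1) choose (s+2))"
  proof -
    have "real_of_int (int(m+2)*int((x+2) choose (r+2))*int((y+2) choose (s+2))
      - (6*int k+1)*int((x+1) choose (r+2))*int((y+1) choose (s+2))
      - (int m+1+2*int k)*int(x choose (r+2))*int(y choose (s+2)))
      = real_of_int (int k*int((x+1) choose (r+2))*int(y choose s) + int k*int(x choose r)*int((y+1) choose (s+2)))"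
      using R by (simp add: algebra_simps)
    then show ?thesis by (rule of_int_eq_iff[THEN iffD1])
  qed
  show ?thesis unfolding t2 t1 t0 g1 g0
    using arg_cong[OF I, of "\<lambda>z. (-1)^i * z"] by (simp add: algebra_simps)
qed



lemma T_edge:
  assumes k: "1 \<le> k"
  shows "int(m+2)*int((m+2+3*k) choose (4*k)) - (6*int k+1)*int((m+1+3*k) choose (4*k))
       - (int m+1+2*int k)*int((m+3*k) choose (4*k)) = int k * int((m+3*k) choose (4*k-2))"
proof -
  define y s where "y = m+3*k" and "s = 4*k-2"
  have e: "4*k = s+2" "m+2+3*k = y+2" "m+1+3*k = y+1" "m+3*k = y" "4*k-2 = s"
    using k by (auto simp: y_def s_def)
  have rx: "real y = real m + 3*real k" "real s = 4*real k - 2"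
    using k by (auto simp: y_def s_def of_nat_diff)
  note B = binom_parts[of y s]
  have R: "(real m+2)*real((y+2) choose (s+2)) - (6*real k+1)*real((y+1) choose (s+2))
      - (real m+2*real k+1)*real(y choose (s+2)) = real k*real(y choose s)"
    apply (rule core_edge[where y="real y" and s="real s" and E="fact (s+2)"
          and V="pochhammer (real y - real s + 1) s"])
    by (rule rx B fact_nonzero)+
  have "real_of_int (int(m+2)*int((y+2) choose (s+2)) - (6*int k+1)*int((y+1) choose (s+2))
      - (int m+1+2*int k)*int(y choose (s+2))) = real_of_int (int k*int(y choose s))"
    using R by (simp add: algebra_simps)
  then show ?thesis unfolding e(5) unfolding e(1-4) by (rule of_int_eq_iff[THEN iffD1])
qed

definition GG :: "nat \<Rightarrow> nat \<Rightarrow> nat \<Rightarrow> int" where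
  "GG k m i = (if i = 0 \<or> 2*k < i then 0 else gg k m (i-1))"

lemma T_term:
  assumes i: "i \<le> 2*k"
  shows "int(m+2)*tt k (m+2) i - (6*int k+1)*tt k (m+1) i - (int m+1+2*int k)*tt k m i
         = GG k m (Suc i) - GG k m i"
proof (cases "k = 0")
  case True
  then have "i = 0" using i by simp
  then show ?thesis using True by (simp add: tt_def GG_def)
next
  case False
  then have k: "1 \<le> k" by simp
  show ?thesis
  proof (cases "i = 0")
    case True
    have "tt k (m+2) 0 = int((m+2+3*k) choose (4*k))" "tt k (m+1) 0 = int((m+1+3*k) choose (4*k))"
         "tt k m 0 = int((m+3*k) choose (4*k))" by (simp_all add: tt_def)
    moreover have "GG k m (Suc 0) = int k * int((m+3*k) choose (4*k-2))" "GG k m 0 = 0"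
      using k by (simp_all add: GG_def gg_def)
    ultimately show ?thesis using True T_edge[OF k, of m] by simp
  next
    case i0: False
    show ?thesis
    proof (cases "i = 2*k")
      case True
      have ev: "(-1::int)^(2*k) = 1" by simp
      have od: "(-1::int)^(2*k-1) = -1" using k by (simp add: power_diff)
      have "tt k (m+2) i = int((m+2+3*k) choose (4*k))" "tt k (m+1) i = int((m+1+3*k) choose (4*k))"
           "tt k m i = int((m+3*k) choose (4*k))" using True ev by (simp_all add: tt_def algebra_simps)
      moreover have "GG k m (Suc i) = 0" using True by (simp add: GG_def)
      moreover have "GG k m i = - (int k * int((m+3*k) choose (4*k-2)))"
      proof -
        have "2*(2*k-1) = 4*k-2" "m+k+(2*k-1)+1 = m+3*k" "m+3*k-(2*k-1) = m+k+1" "4*k-2*(2*k-1)-2 = 0"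
          using k by auto
        then show ?thesis using True k od by (simp add: GG_def gg_def algebra_simps)
      qed
      ultimately show ?thesis using T_edge[OF k, of m] by simp
    next
      case False
      then have i2: "i < 2*k" using i by simp
      have "GG k m (Suc i) = gg k m i" "GG k m i = gg k m (i-1)"
        using i0 i2 by (simp_all add: GG_def)
      then show ?thesis using T_gen[of i k m] i0 i2 by simp
    qed
  qed
qed

lemma ibinom_nat: "ibinom (int a) (int a - int c) = int (a choose c)"
proof (cases "c \<le> a")
  case True
  then have "nat (int a - int c) = a - c" by simp
  then show ?thesis using True by (simp add: ibinom_def binomial_symmetric[symmetric])
next
  case False
  then show ?thesis by (simp add: ibinom_def)
qed

lemma seqT_tt: "seqT k m = (\<Sum>i=0..2*k. tt k m i)"
  unfolding seqT_def
proof (rule sum.cong[OF refl])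
  fix i assume "i \<in> {0..2*k}"
  then have i: "i \<le> 2*k" by simp
  have 1: "ibinom (int m + int k + int i) (int m + int k - int i) = int ((m+k+i) choose (2*i))"
    using ibinom_nat[of "m+k+i" "2*i"] by (simp add: algebra_simps)
  have "int (m+3*k-i) = int m + 3*int k - int i" "int (4*k-2*i) = 4*int k - 2*int i" using i by auto
  then have 2: "ibinom (int m + 3 * int k - int i) (int m - int k + int i) = int ((m+3*k-i) choose (4*k-2*i))"
    using ibinom_nat[of "m+3*k-i" "4*k-2*i"] by (simp add: algebra_simps)
  show "(-1) ^ i * ibinom (int m + int k + int i) (int m + int k - int i) *
        ibinom (int m + 3 * int k - int i) (int m - int k + int i) = tt k m i"
    unfolding 1 2 tt_def by simp
qed

lemma T_rec: "int (m + 2) * seqT k (m + 2)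
          = (6 * int k + 1) * seqT k (m + 1) + (int m + 1 + 2 * int k) * seqT k m"
proof -
  have "int (m + 2) * seqT k (m + 2) - (6 * int k + 1) * seqT k (m + 1) - (int m + 1 + 2 * int k) * seqT k m
     = (\<Sum>i=0..2*k. int(m+2)*tt k (m+2) i - (6*int k+1)*tt k (m+1) i - (int m+1+2*int k)*tt k m i)"
    unfolding seqT_tt by (simp add: sum_distrib_left sum_subtractf)
  also have "\<dots> = (\<Sum>i=0..2*k. GG k m (Suc i) - GG k m i)"
    by (rule sum.cong[OF refl], rule T_term) simp
  also have "\<dots> = GG k m (Suc (2*k)) - GG k m 0" by (rule sum_Suc_diff) simp
  also have "\<dots> = 0" by (simp add: GG_def)
  finally show ?thesis by simp
qed


unbundle fps_syntax

lemma binom_step: "(n+1) * (N choose (n+1)) = (N - n) * (N choose n)"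
proof (cases N)
  case 0 then show ?thesis by simp
next
  case (Suc N')
  have "(n+1) * (N choose (n+1)) = N * (N' choose n)"
    using Suc_times_binomial[of n N'] Suc by simp
  also have "\<dots> = (N - n) * (N choose n)"
    using binomial_absorb_comp[of N n] Suc by simp
  finally show ?thesis .
qed

lemma ibinom_nat2: "ibinom (int a) (int b) = int (a choose b)"
  by (simp add: ibinom_def)

definition FA :: "nat \<Rightarrow> int fps" where "FA k = Abs_fps (\<lambda>j. int (2*k choose j))"
definition FB :: "nat \<Rightarrow> int fps" where "FB k = Abs_fps (\<lambda>i. int ((4*k+i) choose i))"

lemma seqS_fps: "seqS k m = (-1)^k * (FB k * FA k) $ m"
  unfolding seqS_def fps_mult_nth FA_def FB_def
proof (rule arg_cong[where f="\<lambda>s. (-1)^k * s"], rule sum.cong[OF refl])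
  fix i assume "i \<in> {0..m}"
  then have i: "i \<le> m" by simp
  have 1: "ibinom (2 * int k) (int m - int i) = int (2*k choose (m-i))"
    using ibinom_nat2[of "2*k" "m-i"] i by (simp add: of_nat_diff)
  have 2: "ibinom (4 * int k + int i) (int i) = int ((4*k+i) choose i)"
    using ibinom_nat2[of "4*k+i" i] by simp
  show "ibinom (2 * int k) (int m - int i) * ibinom (4 * int k + int i) (int i) =
        Abs_fps (\<lambda>i. int ((4*k+i) choose i)) $ i * Abs_fps (\<lambda>j. int (2*k choose j)) $ (m-i)"
    unfolding 1 2 by simp
qed

lemma FA_deriv: "(1 + fps_X) * fps_deriv (FA k) = fps_const (2*int k) * FA k"
proof (rule fps_ext)
  fix n
  have s: "\<And>n. int (n+1) * int (2*k choose (n+1)) = (2*int k - int n) * int (2*k choose n)"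
  proof -
    fix n
    show "int (n+1) * int (2*k choose (n+1)) = (2*int k - int n) * int (2*k choose n)"
    proof (cases "n \<le> 2*k")
      case True
      then show ?thesis using arg_cong[OF binom_step[of n "2*k"], of int] by (simp add: of_nat_diff algebra_simps)
    next
      case False
      then show ?thesis by (simp add: not_le binomial_eq_0)
    qed
  qed
  show "((1 + fps_X) * fps_deriv (FA k)) $ n = (fps_const (2*int k) * FA k) $ n"
  proof (cases n)
    case 0
    then show ?thesis using s[of 0] by (simp add: FA_def algebra_simps)
  next
    case (Suc n')
    show ?thesis using s[of n] s[of n'] Suc by (simp add: FA_def algebra_simps)
  qed
qed

lemma FB_deriv: "(1 - fps_X) * fps_deriv (FB k) = fps_const (4*int k + 1) * FB k"
proof (rule fps_ext)
  fix n
  have s: "\<And>n. int (Suc n) * int (Suc (4*k+n) choose Suc n) = int (Suc (4*k+n)) * int ((4*k+n) choose n)"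
    by (simp only: of_nat_mult[symmetric] Suc_times_binomial)
  show "((1 - fps_X) * fps_deriv (FB k)) $ n = (fps_const (4*int k + 1) * FB k) $ n"
  proof (cases n)
    case 0
    then show ?thesis using s[of 0] by (simp del: binomial_Suc_Suc add: FB_def algebra_simps)
  next
    case (Suc n')
    show ?thesis using s[of n] s[of n'] Suc by (simp del: binomial_Suc_Suc add: FB_def algebra_simps)
  qed
qed

lemma F_deriv: "(1 - fps_X^2) * fps_deriv (FB k * FA k)
   = (fps_const (6*int k+1) + fps_const (2*int k+1) * fps_X) * (FB k * FA k)"
proof -
  have "(1 - fps_X^2) * fps_deriv (FB k * FA k)
     = (1 + fps_X) * FA k * ((1 - fps_X) * fps_deriv (FB k)) + (1 - fps_X) * FB k * ((1 + fps_X) * fps_deriv (FA k))"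
    by (simp add: algebra_simps power2_eq_square)
  also have "\<dots> = (1 + fps_X) * FA k * (fps_const (4*int k + 1) * FB k) + (1 - fps_X) * FB k * (fps_const (2*int k) * FA k)"
    by (simp only: FA_deriv FB_deriv)
  also have "\<dots> = (fps_const (4*int k + 1) * (1 + fps_X) + fps_const (2*int k) * (1 - fps_X)) * (FB k * FA k)"
    by (simp add: algebra_simps)
  also have "fps_const (4*int k + 1) * (1 + fps_X) + fps_const (2*int k) * (1 - fps_X)
     = fps_const (6*int k+1) + fps_const (2*int k+1) * fps_X"
    by (rule fps_ext) (simp add: algebra_simps)
  finally show ?thesis .
qed

lemma S_rec: "int (m + 2) * seqS k (m + 2)
          = (6 * int k + 1) * seqS k (m + 1) + (int m + 1 + 2 * int k) * seqS k m"
proof -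
  define F where "F = FB k * FA k"
  have c: "((1 - fps_X^2) * fps_deriv F) $ (m+1) = ((fps_const (6*int k+1) + fps_const (2*int k+1) * fps_X) * F) $ (m+1)"
    using F_deriv F_def by simp
  have l: "((1 - fps_X^2) * fps_deriv F) $ (m+1) = int (m+2) * F $ (m+2) - int m * F $ m"
    by (cases m; simp add: left_diff_distrib fps_X_power_mult_nth; simp add: algebra_simps)
  have r: "((fps_const (6*int k+1) + fps_const (2*int k+1) * fps_X) * F) $ (m+1)
      = (6*int k+1) * F $ (m+1) + (2*int k+1) * F $ m"
    by (simp add: distrib_right mult.assoc)
  have "int (m+2) * F $ (m+2) = (6*int k+1) * F $ (m+1) + (int m + 1 + 2*int k) * F $ m"
    using c l r by (simp add: algebra_simps)
  then show ?thesis unfolding seqS_fps F_def[symmetric]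
    by (simp add: algebra_simps)
qed



lemma S0: "seqS k 0 = (-1)^k"
  by (simp add: seqS_def ibinom_def)

lemma S1: "seqS k 1 = (-1) ^ k * (6 * int k + 1)"
proof -
  have h: "ibinom (2*int k) 1 = 2*int k" "ibinom (2*int k) 0 = 1" "ibinom (4*int k) 0 = 1"
    "ibinom (4*int k+1) 1 = 4*int k+1" "ibinom (1+4*int k) 1 = 4*int k+1"
    by (auto simp: ibinom_def nat_mult_distrib)
  show ?thesis by (simp add: seqS_def h; simp add: algebra_simps)
qed

lemma T0: "seqT k 0 = (-1)^k"
proof -
  have "seqT k 0 = (\<Sum>i\<in>{k}. tt k 0 i)"
    unfolding seqT_tt
  proof (rule sum.mono_neutral_right)
    show "\<forall>i\<in>{0..2*k} - {k}. tt k 0 i = 0"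
    proof
      fix i assume "i \<in> {0..2*k} - {k}"
      then have "i < k \<or> k < i" by auto
      then show "tt k 0 i = 0"
      proof
        assume "i < k" then have "0+3*k-i < 4*k-2*i" by simp
        then show ?thesis by (simp add: tt_def binomial_eq_0)
      next
        assume "k < i" then have "0+k+i < 2*i" by simp
        then show ?thesis by (simp add: tt_def binomial_eq_0)
      qed
    qed
  qed auto
  also have "\<dots> = (-1)^k"
  proof -
    have e: "0+k+k = 2*k" "0+3*k-k = 4*k-2*k" by auto
    have "(\<Sum>i\<in>{k}. tt k 0 i) = tt k 0 k" by simp
    also have "tt k 0 k = (-1)^k * int ((2*k) choose (2*k)) * int ((4*k-2*k) choose (4*k-2*k))"
      by (simp only: tt_def e)
    finally show ?thesis by simp
  qed
  finally show ?thesis .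
qed

lemma T1: "seqT k 1 = (-1) ^ k * (6 * int k + 1)"
proof (cases k)
  case 0
  then show ?thesis by (simp add: seqT_tt tt_def)
next
  case (Suc j)
  have "seqT k 1 = (\<Sum>i\<in>{j, Suc j, Suc (Suc j)}. tt k 1 i)"
    unfolding seqT_tt
  proof (rule sum.mono_neutral_right)
    show "\<forall>i\<in>{0..2*k} - {j, Suc j, Suc (Suc j)}. tt k 1 i = 0"
    proof
      fix i assume "i \<in> {0..2*k} - {j, Suc j, Suc (Suc j)}"
      then have "i < j \<or> Suc (Suc j) < i" by auto
      then show "tt k 1 i = 0"
      proof
        assume "i < j" then have "1+3*k-i < 4*k-2*i" using Suc by simp
        then show ?thesis by (simp add: tt_def binomial_eq_0)
      next
        assume "Suc (Suc j) < i" then have "1+k+i < 2*i" using Suc by simp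
        then show ?thesis by (simp add: tt_def binomial_eq_0)
      qed
    qed
  qed (use Suc in auto)
  also have "\<dots> = tt k 1 j + tt k 1 (Suc j) + tt k 1 (Suc (Suc j))" by simp
  also have "tt k 1 j = (-1)^j * int ((2*j+2) choose (2*j))"
  proof -
    have e: "1+k+j = 2*j+2" "1+3*k-j = 4*k-2*j" using Suc by auto
    have "tt k 1 j = (-1)^j * int ((2*j+2) choose (2*j)) * int ((4*k-2*j) choose (4*k-2*j))"
      by (simp only: tt_def e)
    then show ?thesis by simp
  qed
  also have "tt k 1 (Suc (Suc j)) = (-1)^j * int ((2*j+2) choose (2*j))"
  proof -
    have e: "1+k+Suc (Suc j) = 2*Suc (Suc j)" "1+3*k-Suc (Suc j) = 2*j+2" "4*k-2*Suc (Suc j) = 2*j"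
      using Suc by auto
    have "tt k 1 (Suc (Suc j)) = (-1)^(Suc (Suc j)) * int ((2*Suc (Suc j)) choose (2*Suc (Suc j))) * int ((2*j+2) choose (2*j))"
      by (simp only: tt_def e)
    then show ?thesis by simp
  qed
  also have "tt k 1 (Suc j) = - ((-1)^j * (int (2*j+3))^2)"
  proof -
    have e: "1+k+Suc j = 2*j+3" "2*Suc j = 2*j+2" "1+3*k-Suc j = 2*j+3" "4*k-2*Suc j = 2*j+2" "4*k-(2*j+2) = 2*j+2"
      using Suc by auto
    have "tt k 1 (Suc j) = (-1)^(Suc j) * int ((2*j+3) choose (2*j+2)) * int ((2*j+3) choose (2*j+2))"
      by (simp only: tt_def e)
    moreover have "(2*j+3) choose (2*j+2) = 2*j+3"
      using binomial_Suc_n[of "2*j+2"] by (simp only: numeral_3_eq_3 add_Suc_right numeral_2_eq_2)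
    ultimately show ?thesis by (simp add: power2_eq_square)
  qed
  also have "(2*j+2) choose (2*j) = (j+1)*(2*j+1)"
  proof -
    have "(2*j+2) choose (2*j) = (2*j+2) choose 2"
      using binomial_symmetric[of "2*j" "2*j+2"] by simp
    also have "\<dots> = (2*j+2)*(2*j+1) div 2" by (simp add: choose_two)
    also have "(2*j+2)*(2*j+1) = 2*((j+1)*(2*j+1))" by simp
    finally show ?thesis by simp
  qed
  finally show ?thesis using Suc by (simp add: algebra_simps power2_eq_square)
qed


theorem mainTheorem13:
  fixes k :: nat
  shows "seqS k 0 = (-1) ^ k
    \<and> seqS k 1 = (-1) ^ k * (6 * int k + 1)
    \<and> (\<forall>m::nat. int (m + 2) * seqS k (m + 2)
          = (6 * int k + 1) * seqS k (m + 1) + (int m + 1 + 2 * int k) * seqS k m)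
    \<and> (\<forall>m::nat. int (m + 2) * seqT k (m + 2)
          = (6 * int k + 1) * seqT k (m + 1) + (int m + 1 + 2 * int k) * seqT k m)
    \<and> seqT k 0 = (-1) ^ k
    \<and> seqT k 1 = (-1) ^ k * (6 * int k + 1)"
  using S0 S1 S_rec T_rec T0 T1 by blast

end
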